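(* Let $(\Omega,\mathcal{A})$ be a measurable space, $\nu:\mathcal{A}\to[0,\infty)$ a (finite, nonnegative) measure, $X$ a Banach space and $\mathcal{F}\subset\mathcal{A}$ a sub-$\sigma$-algebra. Let $\Phi:\Omega\to X$ be Pettis integrable with respect to $\nu$, and assume that the conditional expectation $\Psi=\mathbb{E}(\Phi\mid\mathcal{F})$ exists. Let $\phi:\Omega\to\mathbb{R}$ be $\mathcal{F}$-measurable and such that the product $\phi\Phi:\Omega\to X$ is Pettis integrable with respect to $\nu$. Then the conditional expectation of $\phi\Phi$ with respect to $\mathcal{F}$ exists and $$\mathbb{E}(\phi\Phi\mid\mathcal{F})=\phi\,\mathbb{E}(\Phi\mid\mathcal{F}),$$ that is, $\phi\Psi$ is weakly $\mathcal{F}$-measurable, Pettis integrable with respect to $\nu$, and $(Pe)\int_E\phi\Phi\,d\nu=(Pe)\int_E\phi\Psi\,d\nu$ for every $E\in\mathcal{F}$.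
   Context: $X^*$ denotes the dual of the Banach space $X$. A function $\Phi:\Omega\to X$ is Pettis integrable with respect to $\nu$ if it is weakly measurable (i.e. $x^*\circ\Phi$ is measurable for every $x^*\in X^*$), $x^*\circ\Phi$ is $\nu$-integrable for every $x^*\in X^*$, and for every $D\in\mathcal{A}$ there is $x_D\in X$ with $x^*(x_D)=\int_D x^*(\Phi)\,d\nu$ for all $x^*\in X^*$; one writes $x_D=(Pe)\int_D\Phi\,d\nu$. For a Pettis integrable $\Phi$ and a sub-$\sigma$-algebra $\mathcal{F}\subset\mathcal{A}$, the conditional expectation $\mathbb{E}(\Phi\mid\mathcal{F})$ is (if it exists) a weakly $\mathcal{F}$-measurable function $\Psi:\Omega\to X$ that is Pettis integrable with respect to $\nu$ and satisfies $(Pe)\int_E\Phi\,d\nu=(Pe)\int_E\Psi\,d\nu$ for every $E\in\mathcal{F}$. *)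

theory Defs
  imports "HOL-Probability.Conditional_Expectation"
begin

text \<open>Elements of the dual X* of a real Banach space X are the bounded linear
  functionals X \<Rightarrow> real.\<close>

definition weakly_measurable :: "'a measure \<Rightarrow> ('a \<Rightarrow> 'b::real_normed_vector) \<Rightarrow> bool" where
  "weakly_measurable M \<Phi> \<longleftrightarrow>
     (\<forall>x'::'b \<Rightarrow> real. bounded_linear x' \<longrightarrow> (\<lambda>\<omega>. x' (\<Phi> \<omega>)) \<in> borel_measurable M)"

definition pettis_integrable :: "'a measure \<Rightarrow> ('a \<Rightarrow> 'b::real_normed_vector) \<Rightarrow> bool" where
  "pettis_integrable M \<Phi> \<longleftrightarrow>
     weakly_measurable M \<Phi> \<and>
     (\<forall>x'::'b \<Rightarrow> real. bounded_linear x' \<longrightarrow> integrable M (\<lambda>\<omega>. x' (\<Phi> \<omega>))) \<and>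
     (\<forall>D\<in>sets M. \<exists>xD. \<forall>x'::'b \<Rightarrow> real. bounded_linear x' \<longrightarrow>
         x' xD = (LINT \<omega>:D|M. x' (\<Phi> \<omega>)))"

definition pettis_integral :: "'a measure \<Rightarrow> 'a set \<Rightarrow> ('a \<Rightarrow> 'b::real_normed_vector) \<Rightarrow> 'b" where
  "pettis_integral M D \<Phi> =
     (THE xD. \<forall>x'::'b \<Rightarrow> real. bounded_linear x' \<longrightarrow> x' xD = (LINT \<omega>:D|M. x' (\<Phi> \<omega>)))"

definition is_pettis_cond_exp ::
  "'a measure \<Rightarrow> 'a measure \<Rightarrow> ('a \<Rightarrow> 'b::real_normed_vector) \<Rightarrow> ('a \<Rightarrow> 'b) \<Rightarrow> bool" where
  "is_pettis_cond_exp M F \<Phi> \<Psi> \<longleftrightarrow>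
     weakly_measurable F \<Psi> \<and> pettis_integrable M \<Psi> \<and>
     (\<forall>E\<in>sets F. pettis_integral M E \<Phi> = pettis_integral M E \<Psi>)"

end

theory Submission
  imports Defs "HOL-Analysis.Analysis"
begin



definition hbA :: "'b::real_normed_vector \<Rightarrow> ('b \<times> real) set set" where
  "hbA x0 = {G. (0,0) \<in> G \<and> (\<forall>x a y b. (x,a) \<in> G \<longrightarrow> (y,b) \<in> G \<longrightarrow> (x+y,a+b) \<in> G)
     \<and> (\<forall>c x a. (x,a) \<in> G \<longrightarrow> (c *\<^sub>R x, c*a) \<in> G) \<and> (x0, norm x0) \<in> G
     \<and> (\<forall>x a. (x,a) \<in> G \<longrightarrow> a \<le> norm x)}"

lemma hb_norming:
  fixes x0 :: "'b::real_normed_vector"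
  shows "\<exists>f. bounded_linear f \<and> (\<forall>y. \<bar>f y\<bar> \<le> norm y) \<and> f x0 = norm x0"
proof -
  define A where "A = hbA x0"
  define G0 where "G0 = {(t *\<^sub>R x0, t * norm x0) | t. True}"
  have g1: "(0,0) \<in> G0" unfolding G0_def by (auto intro!: exI[of _ 0])
  have g2: "(x0, norm x0) \<in> G0" unfolding G0_def by (auto intro!: exI[of _ 1])
  have g3: "(x+y,a+b) \<in> G0" if h: "(x,a) \<in> G0" "(y,b) \<in> G0" for x a y b
  proof -
    obtain s t where "x = s *\<^sub>R x0" "a = s * norm x0" "y = t *\<^sub>R x0" "b = t * norm x0"
      using h unfolding G0_def by auto
    then show ?thesis unfolding G0_def
      by (auto simp: scaleR_add_left algebra_simps intro!: exI[of _ "s+t"])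
  qed
  have g4: "(c *\<^sub>R x, c*a) \<in> G0" if h: "(x,a) \<in> G0" for c x a
  proof -
    obtain s where "x = s *\<^sub>R x0" "a = s * norm x0" using h unfolding G0_def by auto
    then show ?thesis unfolding G0_def by (auto intro!: exI[of _ "c * s"])
  qed
  have g5: "a \<le> norm x" if h: "(x,a) \<in> G0" for x a
  proof -
    obtain s where "x = s *\<^sub>R x0" "a = s * norm x0" using h unfolding G0_def by auto
    then show ?thesis by (auto intro: mult_right_mono)
  qed
  have G0A: "G0 \<in> A" unfolding A_def hbA_def using g1 g2 g3 g4 g5 by blast
  have "\<exists>G\<in>A. \<forall>X\<in>A. G \<subseteq> X \<longrightarrow> X = G"
  proof (rule subset_Zorn_nonempty)
    show "A \<noteq> {}" using G0A by auto
  next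
    fix C assume ne: "C \<noteq> {}" and ch: "subset.chain A C"
    have CA: "C \<subseteq> A" and tot: "\<And>X Y. X \<in> C \<Longrightarrow> Y \<in> C \<Longrightarrow> X \<subseteq> Y \<or> Y \<subseteq> X"
      using ch by (auto simp: subset.chain_def)
    show "\<Union>C \<in> A" unfolding A_def hbA_def
    proof (intro CollectI conjI allI impI)
      obtain X where "X \<in> C" using ne by auto
      then show "(0,0) \<in> \<Union>C" "(x0, norm x0) \<in> \<Union>C" using CA by (auto simp: A_def hbA_def)
    next
      fix x a y b assume "(x,a) \<in> \<Union>C" "(y,b) \<in> \<Union>C"
      then obtain X Y where XY: "X \<in> C" "Y \<in> C" "(x,a) \<in> X" "(y,b) \<in> Y" by auto
      show "(x+y,a+b) \<in> \<Union>C"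
      proof (cases "X \<subseteq> Y")
        case True
        have "Y \<in> A" using XY CA by auto
        then have "(x+y,a+b) \<in> Y" using XY True unfolding A_def hbA_def by blast
        then show ?thesis using XY by blast
      next
        case False
        then have "Y \<subseteq> X" using tot XY by auto
        have "X \<in> A" using XY CA by auto
        then have "(x+y,a+b) \<in> X" using XY \<open>Y \<subseteq> X\<close> unfolding A_def hbA_def by blast
        then show ?thesis using XY by blast
      qed
    next
      fix c x a assume "(x,a) \<in> \<Union>C"
      then obtain X where "X \<in> C" "(x,a) \<in> X" by auto
      moreover then have "X \<in> A" using CA by auto
      ultimately show "(c *\<^sub>R x, c*a) \<in> \<Union>C" unfolding A_def hbA_def by blast
    next
      fix x a assume "(x,a) \<in> \<Union>C"
      then obtain X where "X \<in> C" "(x,a) \<in> X" by auto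
      moreover then have "X \<in> A" using CA by auto
      ultimately show "a \<le> norm x" unfolding A_def hbA_def by blast
    qed
  qed
  then obtain G where GA: "G \<in> A" and max: "\<And>X. X \<in> A \<Longrightarrow> G \<subseteq> X \<Longrightarrow> X = G" by blast
  have G0: "(0,0) \<in> G" and Gadd: "\<And>x a y b. (x,a) \<in> G \<Longrightarrow> (y,b) \<in> G \<Longrightarrow> (x+y,a+b) \<in> G"
    and Gsc: "\<And>c x a. (x,a) \<in> G \<Longrightarrow> (c *\<^sub>R x, c*a) \<in> G" and Gx0: "(x0, norm x0) \<in> G"
    and Gdom: "\<And>x a. (x,a) \<in> G \<Longrightarrow> a \<le> norm x"
    using GA by (auto simp: A_def hbA_def)
  have uniq: "a = b" if "(x,a) \<in> G" "(x,b) \<in> G" for x a b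
  proof -
    have "(x + (-1) *\<^sub>R x, a + (-1)*b) \<in> G" using Gadd[OF that(1) Gsc[OF that(2)]] .
    then have "a - b \<le> 0" using Gdom by fastforce
    moreover have "(x + (-1) *\<^sub>R x, b + (-1)*a) \<in> G" using Gadd[OF that(2) Gsc[OF that(1)]] .
    then have "b - a \<le> 0" using Gdom by fastforce
    ultimately show ?thesis by simp
  qed
  have total: "\<exists>a. (z,a) \<in> G" for z
  proof (rule ccontr)
    assume nz: "\<nexists>a. (z, a) \<in> G"
    define L where "L = {a - norm (x - z) | x a. (x,a) \<in> G}"
    define U where "U = {norm (y + z) - b | y b. (y,b) \<in> G}"
    have LU: "l \<le> u" if lu: "l \<in> L" "u \<in> U" for l u
    proof -
      obtain x a where l: "l = a - norm (x - z)" "(x,a) \<in> G" using lu L_def by auto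
      obtain y b where u: "u = norm (y + z) - b" "(y,b) \<in> G" using lu U_def by auto
      have "a + b \<le> norm (x + y)" using Gdom[OF Gadd[OF l(2) u(2)]] .
      also have "\<dots> \<le> norm (x - z) + norm (y + z)"
        using norm_triangle_ineq[of "x - z" "y + z"] by simp
      finally show ?thesis using l u by simp
    qed
    have Lne: "L \<noteq> {}" using G0 L_def by auto
    have Une: "U \<noteq> {}" using G0 U_def by auto
    then obtain u0 where "u0 \<in> U" by auto
    then have bddL: "bdd_above L" using LU by (auto simp: bdd_above_def)
    define c where "c = Sup L"
    have Lc: "l \<le> c" if "l \<in> L" for l using cSup_upper[OF that bddL] c_def by simp
    have cU: "c \<le> u" if "u \<in> U" for u unfolding c_def using Lne LU that by (intro cSup_least) auto
    define G' where "G' = {(x + t *\<^sub>R z, a + t * c) | x a t. (x,a) \<in> G}"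
    have G'A: "G' \<in> A" unfolding A_def hbA_def
    proof (intro CollectI conjI allI impI)
      show "(0,0) \<in> G'" unfolding G'_def using G0 by (intro CollectI exI[of _ 0] exI[of _ "0::real"] exI[of _ "0::real"]) auto
      show "(x0, norm x0) \<in> G'" unfolding G'_def using Gx0 by (intro CollectI exI[of _ x0] exI[of _ "norm x0"] exI[of _ "0::real"]) auto
    next
      fix x a y b assume "(x,a) \<in> G'" "(y,b) \<in> G'"
      then obtain x1 a1 t1 x2 a2 t2 where h: "x = x1 + t1 *\<^sub>R z" "a = a1 + t1 * c" "(x1,a1) \<in> G"
        "y = x2 + t2 *\<^sub>R z" "b = a2 + t2 * c" "(x2,a2) \<in> G" unfolding G'_def by auto
      show "(x+y,a+b) \<in> G'" unfolding G'_def using h Gadd[OF h(3) h(6)]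
        by (intro CollectI exI[of _ "x1+x2"] exI[of _ "a1+a2"] exI[of _ "t1+t2"]) (auto simp: algebra_simps)
    next
      fix d x a assume "(x,a) \<in> G'"
      then obtain x1 a1 t1 where h: "x = x1 + t1 *\<^sub>R z" "a = a1 + t1 * c" "(x1,a1) \<in> G" unfolding G'_def by auto
      show "(d *\<^sub>R x, d*a) \<in> G'" unfolding G'_def using h Gsc[OF h(3), of d]
        by (intro CollectI exI[of _ "d *\<^sub>R x1"] exI[of _ "d*a1"] exI[of _ "d*t1"]) (auto simp: algebra_simps)
    next
      fix x a assume "(x,a) \<in> G'"
      then obtain x1 a1 t where h: "x = x1 + t *\<^sub>R z" "a = a1 + t * c" "(x1,a1) \<in> G" unfolding G'_def by auto
      show "a \<le> norm x"
      proof (cases t "0::real" rule: linorder_cases)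
        case equal
        then show ?thesis using h Gdom by auto
      next
        case greater
        have "(inverse t *\<^sub>R x1, inverse t * a1) \<in> G" using Gsc[OF h(3)] .
        then have "norm (inverse t *\<^sub>R x1 + z) - inverse t * a1 \<in> U" unfolding U_def by blast
        then have "c \<le> norm (inverse t *\<^sub>R x1 + z) - inverse t * a1" using cU by blast
        then have "t * c \<le> t * (norm (inverse t *\<^sub>R x1 + z) - inverse t * a1)"
          using greater by (intro mult_left_mono) auto
        also have "\<dots> = norm (t *\<^sub>R (inverse t *\<^sub>R x1 + z)) - a1" using greater
          by (simp add: right_diff_distrib)
        also have "t *\<^sub>R (inverse t *\<^sub>R x1 + z) = x1 + t *\<^sub>R z" using greater
          by (simp add: scaleR_add_right)
        finally show ?thesis using h by simp
      next
        case less
        define s where "s = - t"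
        have s: "s > 0" using less s_def by simp
        have "(inverse s *\<^sub>R x1, inverse s * a1) \<in> G" using Gsc[OF h(3)] .
        then have "inverse s * a1 - norm (inverse s *\<^sub>R x1 - z) \<in> L" unfolding L_def by blast
        then have "inverse s * a1 - norm (inverse s *\<^sub>R x1 - z) \<le> c" using Lc by blast
        then have "s * (inverse s * a1 - norm (inverse s *\<^sub>R x1 - z)) \<le> s * c"
          using s by (intro mult_left_mono) auto
        moreover have "s * (inverse s * a1 - norm (inverse s *\<^sub>R x1 - z)) = a1 - norm (s *\<^sub>R (inverse s *\<^sub>R x1 - z))" using s
          by (simp add: right_diff_distrib)
        moreover have "s *\<^sub>R (inverse s *\<^sub>R x1 - z) = x1 + t *\<^sub>R z" using s s_def
          by (simp add: scaleR_diff_right)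
        ultimately have "a1 - norm (x1 + t *\<^sub>R z) \<le> s * c" by simp
        then show ?thesis using h unfolding s_def by simp
      qed
    qed
    have "G \<subseteq> G'" unfolding G'_def
    proof
      fix p assume "p \<in> G"
      then show "p \<in> {(x + t *\<^sub>R z, a + t * c) | x a t. (x,a) \<in> G}"
      proof (cases p)
        case (Pair a b)
        then show ?thesis using \<open>p \<in> G\<close> by (intro CollectI exI[of _ a] exI[of _ b] exI[of _ "0::real"]) auto
      qed
    qed
    then have "G' = G" using max G'A by blast
    moreover have "(z, c) \<in> G'" unfolding G'_def using G0
      by (intro CollectI exI[of _ 0] exI[of _ "0::real"] exI[of _ "1::real"]) auto
    ultimately show False using nz by auto
  qed
  define f where "f y = (THE a. (y,a) \<in> G)" for y
  have fG: "(y, f y) \<in> G" for y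
    unfolding f_def using total[of y] uniq by (metis theI)
  have fE: "f y = a" if "(y,a) \<in> G" for y a using uniq[OF that fG] by simp
  have fadd: "f (x + y) = f x + f y" for x y using fE[OF Gadd[OF fG fG]] .
  have fsc: "f (r *\<^sub>R x) = r *\<^sub>R f x" for r x using fE[OF Gsc[OF fG]] by simp
  have fle: "f y \<le> norm y" for y using Gdom[OF fG] .
  have fabs: "\<bar>f y\<bar> \<le> norm y" for y
  proof -
    have "- f y = f ((-1) *\<^sub>R y)" using fsc[of "-1" y] by simp
    also have "\<dots> \<le> norm y" using fle[of "(-1) *\<^sub>R y"] by simp
    finally show ?thesis using fle[of y] by simp
  qed
  have "bounded_linear f"
    by (rule bounded_linear_intro[where K=1]) (use fadd fsc fabs in auto)
  moreover have "f x0 = norm x0" using fE[OF Gx0] .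
  ultimately show ?thesis using fabs by blast
qed



lemma ubp:
  fixes Y :: "'b::banach set"
  assumes bnd: "\<And>f::'b \<Rightarrow> real. bounded_linear f \<Longrightarrow> \<exists>k. \<forall>y\<in>Y. \<bar>f y\<bar> \<le> k"
  shows "\<exists>K. \<forall>f::'b \<Rightarrow> real. bounded_linear f \<longrightarrow> (\<forall>y. \<bar>f y\<bar> \<le> norm y) \<longrightarrow> (\<forall>y\<in>Y. \<bar>f y\<bar> \<le> K)"
proof -
  define C where "C n = {z::'b \<Rightarrow>\<^sub>L real. \<forall>y\<in>Y. \<bar>blinfun_apply z y\<bar> \<le> real n}" for n::nat
  have clC: "closed (C n)" for n
  proof -
    have "C n = (\<Inter>y\<in>Y. {z::'b \<Rightarrow>\<^sub>L real. \<bar>blinfun_apply z y\<bar> \<le> real n})" unfolding C_def by auto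
    moreover have "closed {z::'b \<Rightarrow>\<^sub>L real. \<bar>blinfun_apply z y\<bar> \<le> real n}" for y
    proof -
      have "continuous_on UNIV (\<lambda>z::'b\<Rightarrow>\<^sub>L real. blinfun_apply z y)"
        by (intro linear_continuous_on blinfun.bounded_linear_left)
      then have "continuous_on UNIV (\<lambda>z::'b\<Rightarrow>\<^sub>L real. \<bar>blinfun_apply z y\<bar>)"
        by (rule continuous_on_rabs)
      then show ?thesis by (rule closed_Collect_le) (rule continuous_on_const)
    qed
    ultimately show ?thesis by auto
  qed
  have cover: "\<Union>(range C) = UNIV"
  proof -
    have "z \<in> \<Union>(range C)" for z
    proof -
      obtain k where k: "\<forall>y\<in>Y. \<bar>blinfun_apply z y\<bar> \<le> k" using bnd[of "blinfun_apply z"] blinfun.bounded_linear_right by blast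
      obtain n::nat where "k \<le> real n" using real_arch_simple by blast
      then have "z \<in> C n" using k unfolding C_def by force
      then show ?thesis by blast
    qed
    then show ?thesis by blast
  qed
  have "\<exists>n. interior (C n) \<noteq> {}"
  proof (rule ccontr)
    assume "\<nexists>n. interior (C n) \<noteq> {}"
    have "euclidean interior_of \<Union>(range C) = {}"
      proof (rule Baire_category_alt)
        show "completely_metrizable_space (euclidean:: ('b \<Rightarrow>\<^sub>L real) topology) \<or> locally_compact_space (euclidean:: ('b \<Rightarrow>\<^sub>L real) topology) \<and> regular_space (euclidean:: ('b \<Rightarrow>\<^sub>L real) topology)"
          using completely_metrizable_space_euclidean by blast
        show "countable (range C)" by simp
        fix T assume "T \<in> range C"
        then obtain m where "T = C m" by blast
        then show "closedin euclidean T \<and> euclidean interior_of T = {}"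
          using clC \<open>\<nexists>n. interior (C n) \<noteq> {}\<close> by auto
      qed
    then show False using cover by simp
  qed
  then obtain n z0 where "z0 \<in> interior (C n)" by blast
  then obtain r where r: "r > 0" "ball z0 r \<subseteq> C n" using mem_interior by blast
  have z0C: "z0 \<in> C n" using r by auto
  show ?thesis
  proof (intro exI[of _ "4 * real n / r"] allI impI ballI)
    fix f :: "'b \<Rightarrow> real" and y assume f: "bounded_linear f" and fle: "\<forall>y. \<bar>f y\<bar> \<le> norm y" and y: "y \<in> Y"
    define w where "w = Blinfun f"
    have wa: "blinfun_apply w = f" unfolding w_def using bounded_linear_Blinfun_apply[OF f] .
    have nw: "norm w \<le> 1" by (rule norm_blinfun_bound) (use fle wa in auto)
    define u where "u = z0 + (r/2) *\<^sub>R w"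
    have "dist z0 u = norm ((r/2) *\<^sub>R w)" unfolding u_def dist_norm by simp
    also have "\<dots> \<le> r/2" using nw r by (simp add: mult_left_le)
    also have "\<dots> < r" using r by simp
    finally have "u \<in> C n" using r by auto
    then have "\<bar>blinfun_apply u y\<bar> \<le> real n" using y unfolding C_def by auto
    moreover have "blinfun_apply u y = blinfun_apply z0 y + (r/2) * f y" unfolding u_def
      by (simp add: wa blinfun.add_left blinfun.scaleR_left)
    moreover have "\<bar>blinfun_apply z0 y\<bar> \<le> real n" using z0C y unfolding C_def by auto
    ultimately have "(r/2) * \<bar>f y\<bar> \<le> 2 * real n" using r by (auto simp: abs_mult)
    then show "\<bar>f y\<bar> \<le> 4 * real n / r" using r by (simp add: field_simps)
  qed
qed




lemma sep_points:
  fixes x y :: "'b::real_normed_vector"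
  assumes "\<And>f::'b\<Rightarrow>real. bounded_linear f \<Longrightarrow> f x = f y"
  shows "x = y"
proof -
  obtain f :: "'b \<Rightarrow> real" where f: "bounded_linear f" "f (x - y) = norm (x - y)"
    using hb_norming[of "x - y"] by blast
  have "f (x - y) = f x - f y" using f(1) by (simp add: linear_diff bounded_linear.linear)
  then show ?thesis using f assms[OF f(1)] by simp
qed

lemma pettis_integral_eq:
  fixes \<Phi> :: "'a \<Rightarrow> 'b::real_normed_vector" and x' :: "'b \<Rightarrow> real"
  assumes "pettis_integrable M \<Phi>" "D \<in> sets M" "bounded_linear x'"
  shows "x' (pettis_integral M D \<Phi>) = (LINT \<omega>:D|M. x' (\<Phi> \<omega>))"
proof -
  let ?P' = "\<lambda>D xD. \<forall>x'::'b \<Rightarrow> real. bounded_linear x' \<longrightarrow> x' xD = (LINT \<omega>:D|M. x' (\<Phi> \<omega>))"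
  let ?P = "?P' D"
  have "\<forall>D\<in>sets M. \<exists>xD. ?P' D xD" using assms(1) unfolding pettis_integrable_def by (elim conjE)
  then obtain xD where xD: "?P xD" using assms(2) by blast
  have "\<exists>!xD. ?P xD"
  proof (rule ex1I[of _ xD])
    show "?P xD" by fact
    fix z assume z: "?P z"
    show "z = xD"
    proof (rule sep_points)
      fix f :: "'b \<Rightarrow> real" assume f: "bounded_linear f"
      have "f z = (LINT \<omega>:D|M. f (\<Phi> \<omega>))" using z f by blast
      also have "\<dots> = f xD" using xD f by metis
      finally show "f z = f xD" .
    qed
  qed
  then have "?P (THE xD. ?P xD)" by (rule theI')
  then have "?P (pettis_integral M D \<Phi>)" unfolding pettis_integral_def .
  then have "bounded_linear x' \<longrightarrow> x' (pettis_integral M D \<Phi>) = (LINT \<omega>:D|M. x' (\<Phi> \<omega>))" by (rule spec)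
  then show ?thesis using assms(3) by (rule mp)
qed

lemma pettis_integral_cong:
  fixes \<Phi> \<Psi> :: "'a \<Rightarrow> 'b::real_normed_vector"
  assumes "\<And>x'::'b\<Rightarrow>real. bounded_linear x' \<Longrightarrow> (LINT \<omega>:D|M. x' (\<Phi> \<omega>)) = (LINT \<omega>:D|M. x' (\<Psi> \<omega>))"
  shows "pettis_integral M D \<Phi> = pettis_integral M D \<Psi>"
  unfolding pettis_integral_def using assms by simp

lemma abs_set_int_le:
  fixes v :: "'a \<Rightarrow> real"
  assumes "integrable N v" "E \<in> sets N"
  shows "\<bar>LINT \<omega>:E|N. v \<omega>\<bar> \<le> (\<integral>\<omega>. \<bar>v \<omega>\<bar> \<partial>N)"
proof -
  have "\<bar>LINT \<omega>:E|N. v \<omega>\<bar> = \<bar>\<integral>\<omega>. indicator E \<omega> * v \<omega> \<partial>N\<bar>" by (simp add: set_lebesgue_integral_def)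
  also have "\<dots> \<le> (\<integral>\<omega>. \<bar>indicator E \<omega> * v \<omega>\<bar> \<partial>N)" using integral_norm_bound[of N "\<lambda>\<omega>. indicator E \<omega> * v \<omega>"] by simp
  also have "\<dots> \<le> (\<integral>\<omega>. \<bar>v \<omega>\<bar> \<partial>N)"
    using assms integrable_real_mult_indicator[OF assms(2,1)]
    by (intro integral_mono integrable_abs) (auto split: split_indicator simp: mult.commute)
  finally show ?thesis .
qed



lemma pettis_L1_bound:
  fixes g :: "'a \<Rightarrow> 'b::banach"
  assumes pg: "pettis_integrable N g"
  shows "\<exists>B\<ge>0. \<forall>f::'b\<Rightarrow>real. bounded_linear f \<longrightarrow> (\<forall>y. \<bar>f y\<bar> \<le> norm y) \<longrightarrow> (\<integral>\<omega>. \<bar>f (g \<omega>)\<bar> \<partial>N) \<le> B"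
proof -
  have meas: "(\<lambda>\<omega>. x' (g \<omega>)) \<in> borel_measurable N" if "bounded_linear x'" for x' :: "'b \<Rightarrow> real"
    using pg that unfolding pettis_integrable_def weakly_measurable_def by blast
  have int: "integrable N (\<lambda>\<omega>. x' (g \<omega>))" if "bounded_linear x'" for x' :: "'b \<Rightarrow> real"
    using pg that unfolding pettis_integrable_def by blast
  define Y where "Y = (\<lambda>E. pettis_integral N E g) ` sets N"
  have "\<exists>k. \<forall>y\<in>Y. \<bar>f y\<bar> \<le> k" if f: "bounded_linear f" for f :: "'b \<Rightarrow> real"
  proof (intro exI ballI)
    fix y assume "y \<in> Y"
    then obtain E where E: "E \<in> sets N" "y = pettis_integral N E g" unfolding Y_def by blast
    have "f y = (LINT \<omega>:E|N. f (g \<omega>))" using pettis_integral_eq[OF pg E(1) f] E(2) by simp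
    then show "\<bar>f y\<bar> \<le> (\<integral>\<omega>. \<bar>f (g \<omega>)\<bar> \<partial>N)" using abs_set_int_le[OF int[OF f] E(1)] by simp
  qed
  then obtain K where K: "\<And>f::'b\<Rightarrow>real. bounded_linear f \<Longrightarrow> (\<forall>y. \<bar>f y\<bar> \<le> norm y) \<Longrightarrow> \<forall>y\<in>Y. \<bar>f y\<bar> \<le> K"
    using ubp[of Y] by blast
  show ?thesis
  proof (intro exI[of _ "max 0 (2*K)"] conjI allI impI)
    fix f :: "'b \<Rightarrow> real" assume f: "bounded_linear f" and fle: "\<forall>y. \<bar>f y\<bar> \<le> norm y"
    define v where "v \<omega> = f (g \<omega>)" for \<omega>
    have vm: "v \<in> borel_measurable N" using meas[OF f] unfolding v_def .
    have vi: "integrable N v" using int[OF f] unfolding v_def .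
    define P where "P = {\<omega>\<in>space N. 0 \<le> v \<omega>}"
    have P: "P \<in> sets N" unfolding P_def using vm by measurable
    have Q: "space N - P \<in> sets N" using P by auto
    have iP: "integrable N (\<lambda>\<omega>. indicator P \<omega> * v \<omega>)" using integrable_real_mult_indicator[OF P vi] by (simp add: mult.commute)
    have iQ: "integrable N (\<lambda>\<omega>. indicator (space N - P) \<omega> * v \<omega>)" using integrable_real_mult_indicator[OF Q vi] by (simp add: mult.commute)
    have "(\<integral>\<omega>. \<bar>v \<omega>\<bar> \<partial>N) = (\<integral>\<omega>. indicator P \<omega> * v \<omega> - indicator (space N - P) \<omega> * v \<omega> \<partial>N)"
      by (rule Bochner_Integration.integral_cong) (auto simp: P_def split: split_indicator)
    also have "\<dots> = (LINT \<omega>:P|N. v \<omega>) - (LINT \<omega>:(space N - P)|N. v \<omega>)"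
      using iP iQ by (simp add: set_lebesgue_integral_def)
    also have "\<dots> \<le> \<bar>LINT \<omega>:P|N. v \<omega>\<bar> + \<bar>LINT \<omega>:(space N - P)|N. v \<omega>\<bar>" by simp
    also have "\<bar>LINT \<omega>:P|N. v \<omega>\<bar> \<le> K"
    proof -
      have "f (pettis_integral N P g) = (LINT \<omega>:P|N. v \<omega>)" using pettis_integral_eq[OF pg P f] v_def by simp
      moreover have "pettis_integral N P g \<in> Y" using P Y_def by blast
      ultimately show ?thesis using K[OF f fle] by force
    qed
    also have "\<bar>LINT \<omega>:(space N - P)|N. v \<omega>\<bar> \<le> K"
    proof -
      have "f (pettis_integral N (space N - P) g) = (LINT \<omega>:(space N - P)|N. v \<omega>)" using pettis_integral_eq[OF pg Q f] v_def by simp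
      moreover have "pettis_integral N (space N - P) g \<in> Y" using Q Y_def by blast
      ultimately show ?thesis using K[OF f fle] by force
    qed
    finally show "(\<integral>\<omega>. \<bar>f (g \<omega>)\<bar> \<partial>N) \<le> max 0 (2*K)" unfolding v_def by simp
  qed simp
qed



lemma floor_step:
  fixes x :: real and n :: nat
  assumes "0 \<le> x" "x \<le> 1"
  obtains k0 where "k0 \<le> Suc n" "real k0 \<le> real (Suc n) * x" "real (Suc n) * x < real k0 + 1"
    "\<And>k. (real k \<le> real (Suc n) * x \<and> real (Suc n) * x < real k + 1) \<longleftrightarrow> k = k0"
proof -
  let ?m = "real (Suc n)"
  define k0 where "k0 = nat (floor (?m * x))"
  have nn: "0 \<le> ?m * x" using assms by simp
  have fl: "0 \<le> floor (?m * x)" using nn by simp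
  have rk: "real k0 = of_int (floor (?m * x))" unfolding k0_def using fl by simp
  have a: "real k0 \<le> ?m * x" using rk by simp
  have b: "?m * x < real k0 + 1" using rk by linarith
  have "?m * x \<le> ?m" using assms by simp
  then have "real k0 \<le> ?m" using a by linarith
  then have c: "k0 \<le> Suc n" by linarith
  have d: "(real k \<le> ?m * x \<and> ?m * x < real k + 1) \<longleftrightarrow> k = k0" for k
  proof
    assume "real k \<le> ?m * x \<and> ?m * x < real k + 1"
    then have "real k < real k0 + 1" "real k0 < real k + 1" using a b by linarith+
    then show "k = k0" by linarith
  qed (use a b in simp)
  show ?thesis using that c a b d by blast
qed

lemma pettis_mult:
  fixes g :: "'a \<Rightarrow> 'b::banach" and h :: "'a \<Rightarrow> real"
  assumes pg: "pettis_integrable N g" and hm: "h \<in> borel_measurable N"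
    and h0: "\<And>\<omega>. 0 \<le> h \<omega>" and h1: "\<And>\<omega>. h \<omega> \<le> 1"
  shows "\<exists>y. \<forall>x'::'b\<Rightarrow>real. bounded_linear x' \<longrightarrow> x' y = (\<integral>\<omega>. h \<omega> * x' (g \<omega>) \<partial>N)"
proof -
  have meas: "(\<lambda>\<omega>. x' (g \<omega>)) \<in> borel_measurable N" if "bounded_linear x'" for x' :: "'b \<Rightarrow> real"
    using pg that unfolding pettis_integrable_def weakly_measurable_def by blast
  have int: "integrable N (\<lambda>\<omega>. x' (g \<omega>))" if "bounded_linear x'" for x' :: "'b \<Rightarrow> real"
    using pg that unfolding pettis_integrable_def by blast
  obtain B where B0: "B \<ge> 0" and B: "\<And>f::'b\<Rightarrow>real. bounded_linear f \<Longrightarrow> (\<forall>y. \<bar>f y\<bar> \<le> norm y) \<Longrightarrow> (\<integral>\<omega>. \<bar>f (g \<omega>)\<bar> \<partial>N) \<le> B"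
    using pettis_L1_bound[OF pg] by blast
  define E where "E n k = {\<omega>\<in>space N. real k \<le> real (Suc n) * h \<omega> \<and> real (Suc n) * h \<omega> < real k + 1}" for n k :: nat
  have Es: "E n k \<in> sets N" for n k unfolding E_def using hm by measurable
  define s where "s n \<omega> = (\<Sum>k\<in>{..Suc n}. (real k / real (Suc n)) * indicator (E n k) \<omega>)" for n \<omega>
  have sh: "\<bar>h \<omega> - s n \<omega>\<bar> \<le> 1 / real (Suc n)" if \<omega>: "\<omega> \<in> space N" for n \<omega>
  proof -
    obtain k0 where k0: "k0 \<le> Suc n" "real k0 \<le> real (Suc n) * h \<omega>" "real (Suc n) * h \<omega> < real k0 + 1"
      "\<And>k. (real k \<le> real (Suc n) * h \<omega> \<and> real (Suc n) * h \<omega> < real k + 1) \<longleftrightarrow> k = k0"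
      using floor_step[of "h \<omega>" n, OF h0 h1] by blast
    have ind: "indicator (E n k) \<omega> = (if k = k0 then 1 else (0::real))" for k
      using k0(4)[of k] \<omega> unfolding E_def by (auto split: split_indicator)
    have "s n \<omega> = (\<Sum>k\<in>{..Suc n}. (if k = k0 then real k / real (Suc n) else 0))"
      unfolding s_def by (intro sum.cong refl) (simp add: ind)
    also have "\<dots> = real k0 / real (Suc n)" using k0(1) by (simp add: sum.delta)
    finally have sval: "s n \<omega> = real k0 / real (Suc n)" .
    have mpos: "0 < real (Suc n)" by simp
    have l1: "real k0 / real (Suc n) \<le> h \<omega>" using k0(2) mpos by (simp add: pos_divide_le_eq mult.commute)
    have l2: "h \<omega> < (real k0 + 1) / real (Suc n)" using k0(3) mpos by (simp add: pos_less_divide_eq mult.commute)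
    have l3: "(real k0 + 1) / real (Suc n) = real k0 / real (Suc n) + 1 / real (Suc n)" by (rule add_divide_distrib)
    moreover have "0 \<le> h \<omega> - real k0 / real (Suc n)" "h \<omega> - real k0 / real (Suc n) < 1 / real (Suc n)"
      using l1 l2 l3 by linarith+
    ultimately show ?thesis using sval by simp
  qed
  define y where "y n = (\<Sum>k\<in>{..Suc n}. (real k / real (Suc n)) *\<^sub>R pettis_integral N (E n k) g)" for n
  have iEk: "integrable N (\<lambda>\<omega>. indicator (E n k) \<omega> * x' (g \<omega>))" if "bounded_linear x'" for x' :: "'b \<Rightarrow> real" and n k
    using integrable_real_mult_indicator[OF Es int[OF that]] by (simp add: mult.commute)
  have seq: "(\<lambda>\<omega>. s n \<omega> * x' (g \<omega>)) = (\<lambda>\<omega>. \<Sum>k\<in>{..Suc n}. (real k / real (Suc n)) * (indicator (E n k) \<omega> * x' (g \<omega>)))" for x' :: "'b \<Rightarrow> real" and n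
    unfolding s_def by (simp only: sum_distrib_right mult.assoc)
  have is_: "integrable N (\<lambda>\<omega>. s n \<omega> * x' (g \<omega>))" if x': "bounded_linear x'" for x' :: "'b \<Rightarrow> real" and n
  proof -
    have "integrable N (\<lambda>\<omega>. \<Sum>k\<in>{..Suc n}. (real k / real (Suc n)) * (indicator (E n k) \<omega> * x' (g \<omega>)))"
      using iEk[OF x'] by (intro Bochner_Integration.integrable_sum integrable_mult_right) auto
    then show ?thesis by (simp only: seq)
  qed
  have ys: "x' (y n) = (\<integral>\<omega>. s n \<omega> * x' (g \<omega>) \<partial>N)" if x': "bounded_linear x'" for x' :: "'b \<Rightarrow> real" and n
  proof -
    have lin: "linear x'" using x' bounded_linear.linear by blast
    have "x' (y n) = (\<Sum>k\<in>{..Suc n}. (real k / real (Suc n)) * x' (pettis_integral N (E n k) g))"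
      unfolding y_def by (simp only: linear_sum[OF lin] linear_cmul[OF lin] o_def real_scaleR_def)
    also have "\<dots> = (\<Sum>k\<in>{..Suc n}. (real k / real (Suc n)) * (\<integral>\<omega>. indicator (E n k) \<omega> * x' (g \<omega>) \<partial>N))"
      using pettis_integral_eq[OF pg Es x'] by (simp add: set_lebesgue_integral_def)
    also have "\<dots> = (\<integral>\<omega>. (\<Sum>k\<in>{..Suc n}. (real k / real (Suc n)) * (indicator (E n k) \<omega> * x' (g \<omega>))) \<partial>N)"
      using iEk[OF x'] by (subst Bochner_Integration.integral_sum) auto
    also have "\<dots> = (\<integral>\<omega>. s n \<omega> * x' (g \<omega>) \<partial>N)"
      by (simp only: seq)
    finally show ?thesis .
  qed
  have ih: "integrable N (\<lambda>\<omega>. h \<omega> * x' (g \<omega>))" if x': "bounded_linear x'" for x' :: "'b \<Rightarrow> real"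
    by (rule Bochner_Integration.integrable_bound[OF int[OF x']]) (use meas[OF x'] hm h0 h1 in \<open>auto simp: abs_mult intro!: mult_left_le_one_le\<close>)
  have key: "\<bar>(\<integral>\<omega>. h \<omega> * x' (g \<omega>) \<partial>N) - (\<integral>\<omega>. s n \<omega> * x' (g \<omega>) \<partial>N)\<bar> \<le> (\<integral>\<omega>. \<bar>x' (g \<omega>)\<bar> \<partial>N) / real (Suc n)"
    if x': "bounded_linear x'" for x' :: "'b \<Rightarrow> real" and n
  proof -
    have "(\<integral>\<omega>. h \<omega> * x' (g \<omega>) \<partial>N) - (\<integral>\<omega>. s n \<omega> * x' (g \<omega>) \<partial>N) = (\<integral>\<omega>. (h \<omega> - s n \<omega>) * x' (g \<omega>) \<partial>N)"
      using ih[OF x'] is_[OF x'] by (simp add: left_diff_distrib)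
    also have "\<bar>\<dots>\<bar> \<le> (\<integral>\<omega>. \<bar>(h \<omega> - s n \<omega>) * x' (g \<omega>)\<bar> \<partial>N)"
      using integral_norm_bound[of N "\<lambda>\<omega>. (h \<omega> - s n \<omega>) * x' (g \<omega>)"] by simp
    also have "\<dots> \<le> (\<integral>\<omega>. (1 / real (Suc n)) * \<bar>x' (g \<omega>)\<bar> \<partial>N)"
    proof (rule integral_mono)
      show "integrable N (\<lambda>\<omega>. \<bar>(h \<omega> - s n \<omega>) * x' (g \<omega>)\<bar>)"
        using ih[OF x'] is_[OF x'] by (intro integrable_abs) (simp add: left_diff_distrib)
      show "integrable N (\<lambda>\<omega>. (1 / real (Suc n)) * \<bar>x' (g \<omega>)\<bar>)"
        using int[OF x'] by (intro integrable_mult_right integrable_abs)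
      fix \<omega> assume "\<omega> \<in> space N"
      then show "\<bar>(h \<omega> - s n \<omega>) * x' (g \<omega>)\<bar> \<le> (1 / real (Suc n)) * \<bar>x' (g \<omega>)\<bar>"
        using mult_right_mono[OF sh[of \<omega> n] abs_ge_zero[of "x' (g \<omega>)"]] by (simp add: abs_mult)
    qed
    also have "\<dots> = (\<integral>\<omega>. \<bar>x' (g \<omega>)\<bar> \<partial>N) / real (Suc n)" by simp
    finally show ?thesis .
  qed
  have dist_y: "dist (y m) (y n) \<le> B / real (Suc m) + B / real (Suc n)" for m n
  proof -
    obtain f where f: "bounded_linear f" "\<forall>z. \<bar>f z\<bar> \<le> norm z" "f (y m - y n) = norm (y m - y n)"
      using hb_norming[of "y m - y n"] by blast
    have "dist (y m) (y n) = f (y m) - f (y n)" using f(1,3) by (simp add: dist_norm linear_diff bounded_linear.linear)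
    also have "\<dots> = (\<integral>\<omega>. s m \<omega> * f (g \<omega>) \<partial>N) - (\<integral>\<omega>. s n \<omega> * f (g \<omega>) \<partial>N)" using ys[OF f(1)] by simp
    also have "\<dots> \<le> \<bar>(\<integral>\<omega>. h \<omega> * f (g \<omega>) \<partial>N) - (\<integral>\<omega>. s m \<omega> * f (g \<omega>) \<partial>N)\<bar> + \<bar>(\<integral>\<omega>. h \<omega> * f (g \<omega>) \<partial>N) - (\<integral>\<omega>. s n \<omega> * f (g \<omega>) \<partial>N)\<bar>"
      by linarith
    also have "\<dots> \<le> (\<integral>\<omega>. \<bar>f (g \<omega>)\<bar> \<partial>N) / real (Suc m) + (\<integral>\<omega>. \<bar>f (g \<omega>)\<bar> \<partial>N) / real (Suc n)"
      using key[OF f(1), of m] key[OF f(1), of n] by linarith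
    also have "\<dots> \<le> B / real (Suc m) + B / real (Suc n)"
      using B[OF f(1,2)] by (intro add_mono divide_right_mono) auto
    finally show ?thesis .
  qed
  have "Cauchy y"
  proof (rule metric_CauchyI)
    fix e :: real assume e: "0 < e"
    obtain M where M: "inverse (real (Suc M)) < e / (2 * B + 1)" using reals_Archimedean[of "e / (2*B+1)"] e B0 by auto
    have "\<forall>m\<ge>M. \<forall>n\<ge>M. dist (y m) (y n) < e"
    proof (intro allI impI)
      fix m n assume mn: "m \<ge> M" "n \<ge> M"
      have "B / real (Suc m) \<le> B / real (Suc M)" using mn B0 by (intro divide_left_mono) auto
      moreover have "B / real (Suc n) \<le> B / real (Suc M)" using mn B0 by (intro divide_left_mono) auto
      moreover have "2 * (B / real (Suc M)) < e"
      proof -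
        have "2 * (B / real (Suc M)) \<le> (2 * B + 1) * inverse (real (Suc M))" by (simp add: field_simps)
        also have "\<dots> < (2 * B + 1) * (e / (2 * B + 1))" using M B0 by (intro mult_strict_left_mono) auto
        also have "\<dots> = e" using B0 by simp
        finally show ?thesis .
      qed
      ultimately show "dist (y m) (y n) < e" using dist_y[of m n] by linarith
    qed
    then show "\<exists>M. \<forall>m\<ge>M. \<forall>n\<ge>M. dist (y m) (y n) < e" by blast
  qed
  then obtain yl where yl: "y \<longlonglongrightarrow> yl" using Cauchy_convergent_iff convergent_def by blast
  show ?thesis
  proof (intro exI[of _ yl] allI impI)
    fix x' :: "'b \<Rightarrow> real" assume x': "bounded_linear x'"
    have t1: "(\<lambda>n. x' (y n)) \<longlonglongrightarrow> x' yl" using bounded_linear.tendsto[OF x' yl] .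
    have "(\<lambda>n. x' (y n) - (\<integral>\<omega>. h \<omega> * x' (g \<omega>) \<partial>N)) \<longlonglongrightarrow> 0"
    proof (rule Lim_null_comparison)
      show "\<forall>\<^sub>F n in sequentially. norm (x' (y n) - (\<integral>\<omega>. h \<omega> * x' (g \<omega>) \<partial>N)) \<le> (\<integral>\<omega>. \<bar>x' (g \<omega>)\<bar> \<partial>N) * inverse (real (Suc n))"
        using key[OF x'] ys[OF x'] by (intro always_eventually allI) (simp add: abs_minus_commute divide_inverse)
      show "(\<lambda>n. (\<integral>\<omega>. \<bar>x' (g \<omega>)\<bar> \<partial>N) * inverse (real (Suc n))) \<longlonglongrightarrow> 0"
        using tendsto_mult_right_zero[OF LIMSEQ_inverse_real_of_nat] by simp
    qed
    then have "(\<lambda>n. x' (y n)) \<longlonglongrightarrow> (\<integral>\<omega>. h \<omega> * x' (g \<omega>) \<partial>N)"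
      by (rule LIM_zero_cancel)
    then show "x' yl = (\<integral>\<omega>. h \<omega> * x' (g \<omega>) \<partial>N)" using t1 LIMSEQ_unique by blast
  qed
qed



theorem mainTheorem1:
  fixes M F :: "'a measure"
    and \<Phi> \<Psi> :: "'a \<Rightarrow> 'b::banach"
    and \<phi> :: "'a \<Rightarrow> real"
  assumes "finite_measure M"
    and "subalgebra M F"
    and "pettis_integrable M \<Phi>"
    and "is_pettis_cond_exp M F \<Phi> \<Psi>"
    and "\<phi> \<in> borel_measurable F"
    and "pettis_integrable M (\<lambda>\<omega>. \<phi> \<omega> *\<^sub>R \<Phi> \<omega>)"
  shows "is_pettis_cond_exp M F (\<lambda>\<omega>. \<phi> \<omega> *\<^sub>R \<Phi> \<omega>) (\<lambda>\<omega>. \<phi> \<omega> *\<^sub>R \<Psi> \<omega>)"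
proof -
  note fm = assms(1) and subalg = assms(2) and pPhi = assms(3) and phiF = assms(5) and pphiPhi = assms(6)
  have PsiF: "weakly_measurable F \<Psi>" and pPsi: "pettis_integrable M \<Psi>"
    and PIeq: "\<And>E. E \<in> sets F \<Longrightarrow> pettis_integral M E \<Phi> = pettis_integral M E \<Psi>"
    using assms(4) unfolding is_pettis_cond_exp_def by auto
  have sfs: "sigma_finite_subalgebra M F"
    using finite_measure_restr_to_subalg[OF subalg fm]
    by (intro sigma_finite_subalgebra.intro subalg) (simp add: finite_measure_def)
  interpret sigma_finite_subalgebra M F by (rule sfs)
  have setsFM: "E \<in> sets M" if "E \<in> sets F" for E using subalg that unfolding subalgebra_def by blast
  have measFM: "f \<in> borel_measurable M" if "f \<in> borel_measurable F" for f :: "'a \<Rightarrow> real"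
    using measurable_from_subalg[OF subalg that] .
  have phiM: "\<phi> \<in> borel_measurable M" using measFM[OF phiF] .
  have lin_sc: "x' (c *\<^sub>R z) = c * x' z" if "bounded_linear x'" for x' :: "'b \<Rightarrow> real" and c z
    using linear_cmul[OF bounded_linear.linear[OF that]] by simp
  have uM: "(\<lambda>\<omega>. x' (\<Phi> \<omega>)) \<in> borel_measurable M" if "bounded_linear x'" for x' :: "'b \<Rightarrow> real"
    using pPhi that unfolding pettis_integrable_def weakly_measurable_def by blast
  have iu: "integrable M (\<lambda>\<omega>. x' (\<Phi> \<omega>))" if "bounded_linear x'" for x' :: "'b \<Rightarrow> real"
    using pPhi that unfolding pettis_integrable_def by blast
  have iv: "integrable M (\<lambda>\<omega>. x' (\<Psi> \<omega>))" if "bounded_linear x'" for x' :: "'b \<Rightarrow> real"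
    using pPsi that unfolding pettis_integrable_def by blast
  have vF: "(\<lambda>\<omega>. x' (\<Psi> \<omega>)) \<in> borel_measurable F" if "bounded_linear x'" for x' :: "'b \<Rightarrow> real"
    using PsiF that unfolding weakly_measurable_def by blast
  have ipu: "integrable M (\<lambda>\<omega>. \<phi> \<omega> * x' (\<Phi> \<omega>))" if x': "bounded_linear x'" for x' :: "'b \<Rightarrow> real"
  proof -
    have "integrable M (\<lambda>\<omega>. x' (\<phi> \<omega> *\<^sub>R \<Phi> \<omega>))" using pphiPhi x' unfolding pettis_integrable_def by blast
    then show ?thesis by (simp add: lin_sc[OF x'])
  qed
  have S1: "(LINT \<omega>:E|M. x' (\<Phi> \<omega>)) = (LINT \<omega>:E|M. x' (\<Psi> \<omega>))" if x': "bounded_linear x'" and E: "E \<in> sets F"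
    for x' :: "'b \<Rightarrow> real" and E
    using pettis_integral_eq[OF pPhi setsFM[OF E] x'] pettis_integral_eq[OF pPsi setsFM[OF E] x'] PIeq[OF E] by simp
  have aev: "AE \<omega> in M. real_cond_exp M F (\<lambda>\<omega>. \<phi> \<omega> * x' (\<Phi> \<omega>)) \<omega> = \<phi> \<omega> * x' (\<Psi> \<omega>)"
    if x': "bounded_linear x'" for x' :: "'b \<Rightarrow> real"
  proof -
    have "AE \<omega> in M. real_cond_exp M F (\<lambda>\<omega>. x' (\<Phi> \<omega>)) \<omega> = x' (\<Psi> \<omega>)"
      by (rule real_cond_exp_charact) (use S1[OF x'] iu[OF x'] iv[OF x'] vF[OF x'] in auto)
    moreover have "AE \<omega> in M. real_cond_exp M F (\<lambda>\<omega>. \<phi> \<omega> * x' (\<Phi> \<omega>)) \<omega> = \<phi> \<omega> * real_cond_exp M F (\<lambda>\<omega>. x' (\<Phi> \<omega>)) \<omega>"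
      by (rule real_cond_exp_mult) (use phiF uM[OF x'] ipu[OF x'] in auto)
    ultimately show ?thesis by auto
  qed
  have pvF: "(\<lambda>\<omega>. \<phi> \<omega> * x' (\<Psi> \<omega>)) \<in> borel_measurable F" if x': "bounded_linear x'" for x' :: "'b \<Rightarrow> real"
    using phiF vF[OF x'] by measurable
  have ipv: "integrable M (\<lambda>\<omega>. \<phi> \<omega> * x' (\<Psi> \<omega>))" if x': "bounded_linear x'" for x' :: "'b \<Rightarrow> real"
  proof -
    have "integrable M (real_cond_exp M F (\<lambda>\<omega>. \<phi> \<omega> * x' (\<Phi> \<omega>)))" using real_cond_exp_int(1)[OF ipu[OF x']] .
    moreover have "integrable M (real_cond_exp M F (\<lambda>\<omega>. \<phi> \<omega> * x' (\<Phi> \<omega>))) = integrable M (\<lambda>\<omega>. \<phi> \<omega> * x' (\<Psi> \<omega>))"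
      by (rule integrable_cong_AE) (use aev[OF x'] measFM[OF pvF[OF x']] in auto)
    ultimately show ?thesis by simp
  qed
  have S2: "(LINT \<omega>:E|M. \<phi> \<omega> * x' (\<Phi> \<omega>)) = (LINT \<omega>:E|M. \<phi> \<omega> * x' (\<Psi> \<omega>))"
    if x': "bounded_linear x'" and E: "E \<in> sets F" for x' :: "'b \<Rightarrow> real" and E
  proof -
    have "(LINT \<omega>:E|M. \<phi> \<omega> * x' (\<Phi> \<omega>)) = (LINT \<omega>:E|M. real_cond_exp M F (\<lambda>\<omega>. \<phi> \<omega> * x' (\<Phi> \<omega>)) \<omega>)"
      by (rule real_cond_exp_intA[OF ipu[OF x'] E])
    also have "\<dots> = (LINT \<omega>:E|M. \<phi> \<omega> * x' (\<Psi> \<omega>))"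
      unfolding set_lebesgue_integral_def
    proof (rule integral_cong_AE)
      show "(\<lambda>\<omega>. indicator E \<omega> *\<^sub>R real_cond_exp M F (\<lambda>\<omega>. \<phi> \<omega> * x' (\<Phi> \<omega>)) \<omega>) \<in> borel_measurable M"
        using setsFM[OF E] by measurable
      show "(\<lambda>\<omega>. indicator E \<omega> *\<^sub>R (\<phi> \<omega> * x' (\<Psi> \<omega>))) \<in> borel_measurable M"
        using setsFM[OF E] measFM[OF pvF[OF x']] by measurable
      show "AE \<omega> in M. indicator E \<omega> *\<^sub>R real_cond_exp M F (\<lambda>\<omega>. \<phi> \<omega> * x' (\<Phi> \<omega>)) \<omega> = indicator E \<omega> *\<^sub>R (\<phi> \<omega> * x' (\<Psi> \<omega>))"
        using aev[OF x'] by auto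
    qed
    finally show ?thesis .
  qed
  have feq: "(\<lambda>\<omega>. x' (\<phi> \<omega> *\<^sub>R \<Psi> \<omega>)) = (\<lambda>\<omega>. \<phi> \<omega> * x' (\<Psi> \<omega>))"
    if x': "bounded_linear x'" for x' :: "'b \<Rightarrow> real"
    using lin_sc[OF x'] by simp
  have wF: "weakly_measurable F (\<lambda>\<omega>. \<phi> \<omega> *\<^sub>R \<Psi> \<omega>)"
    unfolding weakly_measurable_def
  proof (intro allI impI)
    fix x' :: "'b \<Rightarrow> real" assume x': "bounded_linear x'"
    show "(\<lambda>\<omega>. x' (\<phi> \<omega> *\<^sub>R \<Psi> \<omega>)) \<in> borel_measurable F" unfolding feq[OF x'] by (rule pvF[OF x'])
  qed
  have wM: "weakly_measurable M (\<lambda>\<omega>. \<phi> \<omega> *\<^sub>R \<Psi> \<omega>)"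
    unfolding weakly_measurable_def
  proof (intro allI impI)
    fix x' :: "'b \<Rightarrow> real" assume x': "bounded_linear x'"
    show "(\<lambda>\<omega>. x' (\<phi> \<omega> *\<^sub>R \<Psi> \<omega>)) \<in> borel_measurable M" unfolding feq[OF x'] by (rule measFM[OF pvF[OF x']])
  qed
  have exD: "\<exists>xD. \<forall>x'::'b \<Rightarrow> real. bounded_linear x' \<longrightarrow> x' xD = (LINT \<omega>:D|M. x' (\<phi> \<omega> *\<^sub>R \<Psi> \<omega>))"
    if D: "D \<in> sets M" for D
  proof -
    define N where "N = restr_to_subalg M F"
    define g where "g = (\<lambda>\<omega>. \<phi> \<omega> *\<^sub>R \<Psi> \<omega>)"
    have setsN: "sets N = sets F" by (simp add: N_def sets_restr_to_subalg[OF subalg])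
    have pN: "pettis_integrable N g"
      unfolding pettis_integrable_def
    proof (intro conjI allI impI ballI)
      show "weakly_measurable N g" unfolding weakly_measurable_def
      proof (intro allI impI)
        fix x' :: "'b \<Rightarrow> real" assume x': "bounded_linear x'"
        show "(\<lambda>\<omega>. x' (g \<omega>)) \<in> borel_measurable N" unfolding g_def feq[OF x'] N_def
          by (rule measurable_in_subalg[OF subalg pvF[OF x']])
      qed
      fix x' :: "'b \<Rightarrow> real" assume x': "bounded_linear x'"
      show "integrable N (\<lambda>\<omega>. x' (g \<omega>))" unfolding g_def feq[OF x'] N_def
        by (rule integrable_in_subalg[OF subalg pvF[OF x'] ipv[OF x']])
    next
      fix E assume "E \<in> sets N"
      then have E: "E \<in> sets F" using setsN by simp
      show "\<exists>xD. \<forall>x'::'b \<Rightarrow> real. bounded_linear x' \<longrightarrow> x' xD = (LINT \<omega>:E|N. x' (g \<omega>))"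
      proof (intro exI[of _ "pettis_integral M E (\<lambda>\<omega>. \<phi> \<omega> *\<^sub>R \<Phi> \<omega>)"] allI impI)
        fix x' :: "'b \<Rightarrow> real" assume x': "bounded_linear x'"
        have "x' (pettis_integral M E (\<lambda>\<omega>. \<phi> \<omega> *\<^sub>R \<Phi> \<omega>)) = (LINT \<omega>:E|M. x' (\<phi> \<omega> *\<^sub>R \<Phi> \<omega>))"
          by (rule pettis_integral_eq[OF pphiPhi setsFM[OF E] x'])
        also have "\<dots> = (LINT \<omega>:E|M. \<phi> \<omega> * x' (\<Phi> \<omega>))" by (simp only: lin_sc[OF x'])
        also have "\<dots> = (LINT \<omega>:E|M. \<phi> \<omega> * x' (\<Psi> \<omega>))" by (rule S2[OF x' E])
        also have "\<dots> = (LINT \<omega>:E|N. \<phi> \<omega> * x' (\<Psi> \<omega>))"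
          unfolding set_lebesgue_integral_def N_def
          by (rule integral_subalgebra2[OF subalg, symmetric]) (use E pvF[OF x'] in measurable)
        also have "\<dots> = (LINT \<omega>:E|N. x' (g \<omega>))" by (simp only: g_def lin_sc[OF x'])
        finally show "x' (pettis_integral M E (\<lambda>\<omega>. \<phi> \<omega> *\<^sub>R \<Phi> \<omega>)) = (LINT \<omega>:E|N. x' (g \<omega>))" .
      qed
    qed
    define h0 where "h0 = real_cond_exp M F (indicator D)"
    have iD: "integrable M (indicator D :: 'a \<Rightarrow> real)"
      using D finite_measure.emeasure_finite[OF fm, of D] by (simp add: less_top)
    have h0ge: "AE \<omega> in M. 0 \<le> h0 \<omega>" unfolding h0_def
      by (rule real_cond_exp_ge_c[OF iD]) auto
    have h0le: "AE \<omega> in M. h0 \<omega> \<le> 1" unfolding h0_def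
      by (rule real_cond_exp_le_c[OF iD]) (auto split: split_indicator)
    define h where "h \<omega> = max 0 (min 1 (h0 \<omega>))" for \<omega>
    have hF: "h \<in> borel_measurable F" unfolding h_def h0_def by measurable
    have hN: "h \<in> borel_measurable N" unfolding N_def by (rule measurable_in_subalg[OF subalg hF])
    have hb0: "0 \<le> h \<omega>" and hb1: "h \<omega> \<le> 1" for \<omega> unfolding h_def by auto
    obtain y where y: "\<And>x'::'b\<Rightarrow>real. bounded_linear x' \<Longrightarrow> x' y = (\<integral>\<omega>. h \<omega> * x' (g \<omega>) \<partial>N)"
      using pettis_mult[OF pN hN hb0 hb1] by blast
    show ?thesis
    proof (intro exI[of _ y] allI impI)
      fix x' :: "'b \<Rightarrow> real" assume x': "bounded_linear x'"
      have "x' y = (\<integral>\<omega>. h \<omega> * x' (g \<omega>) \<partial>N)" using y[OF x'] .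
      also have "\<dots> = (\<integral>\<omega>. h \<omega> * (\<phi> \<omega> * x' (\<Psi> \<omega>)) \<partial>N)" by (simp only: g_def lin_sc[OF x'])
      also have "\<dots> = (\<integral>\<omega>. h \<omega> * (\<phi> \<omega> * x' (\<Psi> \<omega>)) \<partial>M)" unfolding N_def
        by (rule integral_subalgebra2[OF subalg]) (use hF pvF[OF x'] in measurable)
      also have "\<dots> = (\<integral>\<omega>. (\<phi> \<omega> * x' (\<Psi> \<omega>)) * h0 \<omega> \<partial>M)"
      proof (rule integral_cong_AE)
        show "(\<lambda>\<omega>. h \<omega> * (\<phi> \<omega> * x' (\<Psi> \<omega>))) \<in> borel_measurable M"
          using measFM[OF hF] measFM[OF pvF[OF x']] by measurable
        show "(\<lambda>\<omega>. (\<phi> \<omega> * x' (\<Psi> \<omega>)) * h0 \<omega>) \<in> borel_measurable M"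
          using measFM[OF pvF[OF x']] unfolding h0_def by measurable
        show "AE \<omega> in M. h \<omega> * (\<phi> \<omega> * x' (\<Psi> \<omega>)) = (\<phi> \<omega> * x' (\<Psi> \<omega>)) * h0 \<omega>"
          using h0ge h0le by eventually_elim (simp add: h_def)
      qed
      also have "\<dots> = (\<integral>\<omega>. (\<phi> \<omega> * x' (\<Psi> \<omega>)) * indicator D \<omega> \<partial>M)" unfolding h0_def
        by (rule real_cond_exp_intg(2)) (use integrable_real_mult_indicator[OF D ipv[OF x']] pvF[OF x'] D in auto)
      also have "\<dots> = (LINT \<omega>:D|M. x' (\<phi> \<omega> *\<^sub>R \<Psi> \<omega>))"
        unfolding set_lebesgue_integral_def by (simp only: lin_sc[OF x'] real_scaleR_def mult.commute)
      finally show "x' y = (LINT \<omega>:D|M. x' (\<phi> \<omega> *\<^sub>R \<Psi> \<omega>))" .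
    qed
  qed
  have pM: "pettis_integrable M (\<lambda>\<omega>. \<phi> \<omega> *\<^sub>R \<Psi> \<omega>)"
    unfolding pettis_integrable_def
  proof (intro conjI allI impI ballI)
    show "weakly_measurable M (\<lambda>\<omega>. \<phi> \<omega> *\<^sub>R \<Psi> \<omega>)" by (rule wM)
    fix x' :: "'b \<Rightarrow> real" assume x': "bounded_linear x'"
    show "integrable M (\<lambda>\<omega>. x' (\<phi> \<omega> *\<^sub>R \<Psi> \<omega>))" unfolding feq[OF x'] by (rule ipv[OF x'])
  next
    fix D assume "D \<in> sets M"
    then show "\<exists>xD. \<forall>x'::'b \<Rightarrow> real. bounded_linear x' \<longrightarrow> x' xD = (LINT \<omega>:D|M. x' (\<phi> \<omega> *\<^sub>R \<Psi> \<omega>))"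
      by (rule exD)
  qed
  have eqs: "pettis_integral M E (\<lambda>\<omega>. \<phi> \<omega> *\<^sub>R \<Phi> \<omega>) = pettis_integral M E (\<lambda>\<omega>. \<phi> \<omega> *\<^sub>R \<Psi> \<omega>)"
    if E: "E \<in> sets F" for E
  proof (rule pettis_integral_cong)
    fix x' :: "'b \<Rightarrow> real" assume x': "bounded_linear x'"
    show "(LINT \<omega>:E|M. x' (\<phi> \<omega> *\<^sub>R \<Phi> \<omega>)) = (LINT \<omega>:E|M. x' (\<phi> \<omega> *\<^sub>R \<Psi> \<omega>))"
      using S2[OF x' E] by (simp only: lin_sc[OF x'])
  qed
  show ?thesis unfolding is_pettis_cond_exp_def using wF pM eqs by blast
qed


end
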